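(* Let $D$ be a strong nonseparable digraph and let $(D_0,D_1,\ldots,D_k)$ be an ear decomposition of $D$. Let $i\in\{1,\ldots,k\}$ and let $P_{i-1}=(x_0,x_1,\ldots,x_{r-1},x_r)$ be the ear of $D_{i-1}$ in $D$ (so $D_i=D_{i-1}\cup P_{i-1}$), with $l(P_{i-1})\geq 2$. If $D_i$ has a kernel $N$ but $D_{i-1}$ has no kernel, then one of the following holds: (1) $x_0\notin N$, $x_r\in N$ and $l(P_{i-1})$ is odd; (2) $x_0,x_r\notin N$ and $l(P_{i-1})$ is even.
   Context: All digraphs are finite, without loops or multiple arcs. Paths and cycles are directed; the length $l(P)$ of a path $P$ is its number of arcs. A digraph is strong if for every ordered pair of vertices $x,y$ there is a directed path from $x$ to $y$; it is nonseparable if its underlying undirected graph is nonseparable (has no cut vertex). For a subdigraph $H$ of $D$, an ear of $H$ in $D$ is a directed path $(x_0,\ldots,x_r)$ in $D$ whose end vertices lie in $H$ and whose internal vertices do not lie in $H$. An ear decomposition of a nonseparable strong digraph $D$ is a sequence $(D_0,\ldots,D_k)$ of nonseparable strong subdigraphs of $D$ such that $D_0$ is a directed cycle, $D_{j+1}=D_j\cup P_j$ with $P_j$ an ear of $D_j$ in $D$ for each $j\in\{0,\ldots,k-1\}$, and $D_k=D$. A kernel of a digraph is a set $N$ of vertices that is independent (no arc between two of its vertices) and absorbent (every vertex not in $N$ has an out-neighbour in $N$). *)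

theory Defs
  imports Main
begin

type_synonym 'a digraph = "'a set \<times> ('a \<times> 'a) set"

definition verts :: "'a digraph \<Rightarrow> 'a set" where "verts D = fst D"
definition arcs :: "'a digraph \<Rightarrow> ('a \<times> 'a) set" where "arcs D = snd D"

text \<open>Finite, arcs between vertices, no loops (no multiple arcs: arcs form a set).\<close>
definition digraph :: "'a digraph \<Rightarrow> bool" where
  "digraph D \<longleftrightarrow> finite (verts D) \<and> arcs D \<subseteq> verts D \<times> verts D
     \<and> (\<forall>x. (x, x) \<notin> arcs D)"

definition subdigraph :: "'a digraph \<Rightarrow> 'a digraph \<Rightarrow> bool" where
  "subdigraph H D \<longleftrightarrow> verts H \<subseteq> verts D \<and> arcs H \<subseteq> arcs D
     \<and> arcs H \<subseteq> verts H \<times> verts H"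

definition dunion :: "'a digraph \<Rightarrow> 'a digraph \<Rightarrow> 'a digraph" where
  "dunion D1 D2 = (verts D1 \<union> verts D2, arcs D1 \<union> arcs D2)"

definition strong :: "'a digraph \<Rightarrow> bool" where
  "strong D \<longleftrightarrow> (\<forall>x\<in>verts D. \<forall>y\<in>verts D. (x, y) \<in> (arcs D)\<^sup>*)"

definition ug_connected :: "'a set \<Rightarrow> ('a \<times> 'a) set \<Rightarrow> bool" where
  "ug_connected V A \<longleftrightarrow>
     (\<forall>x\<in>V. \<forall>y\<in>V. (x, y) \<in> ((A \<union> A\<inverse>) \<inter> (V \<times> V))\<^sup>*)"

definition nonseparable :: "'a digraph \<Rightarrow> bool" where
  "nonseparable D \<longleftrightarrow> ug_connected (verts D) (arcs D) \<and>
     (\<forall>v\<in>verts D. ug_connected (verts D - {v})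
        (arcs D \<inter> ((verts D - {v}) \<times> (verts D - {v}))))"

definition is_path :: "'a digraph \<Rightarrow> 'a list \<Rightarrow> bool" where
  "is_path D xs \<longleftrightarrow> xs \<noteq> [] \<and> distinct xs \<and> set xs \<subseteq> verts D \<and>
     (\<forall>j. Suc j < length xs \<longrightarrow> (xs ! j, xs ! Suc j) \<in> arcs D)"

definition path_len :: "'a list \<Rightarrow> nat" where
  "path_len xs = length xs - 1"

definition path_digraph :: "'a list \<Rightarrow> 'a digraph" where
  "path_digraph xs = (set xs, {(xs ! j, xs ! Suc j) | j. Suc j < length xs})"

definition is_dicycle :: "'a digraph \<Rightarrow> bool" where
  "is_dicycle C \<longleftrightarrow> (\<exists>xs. length xs \<ge> 2 \<and> distinct xs \<and>
     C = (set xs, {(xs ! j, xs ! ((Suc j) mod length xs)) | j. j < length xs}))"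

definition is_ear :: "'a digraph \<Rightarrow> 'a digraph \<Rightarrow> 'a list \<Rightarrow> bool" where
  "is_ear H D xs \<longleftrightarrow> is_path D xs \<and> hd xs \<in> verts H \<and> last xs \<in> verts H \<and>
     (\<forall>j. 0 < j \<and> Suc j < length xs \<longrightarrow> xs ! j \<notin> verts H)"

definition ear_decomposition ::
  "'a digraph \<Rightarrow> (nat \<Rightarrow> 'a digraph) \<Rightarrow> (nat \<Rightarrow> 'a list) \<Rightarrow> nat \<Rightarrow> bool" where
  "ear_decomposition D Ds Ps k \<longleftrightarrow>
     (\<forall>j\<le>k. subdigraph (Ds j) D \<and> strong (Ds j) \<and> nonseparable (Ds j)) \<and>
     is_dicycle (Ds 0) \<and>
     (\<forall>j<k. is_ear (Ds j) D (Ps j) \<and> Ds (Suc j) = dunion (Ds j) (path_digraph (Ps j))) \<and>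
     Ds k = D"

definition kernel :: "'a digraph \<Rightarrow> 'a set \<Rightarrow> bool" where
  "kernel D N \<longleftrightarrow> N \<subseteq> verts D \<and>
     (\<forall>x\<in>N. \<forall>y\<in>N. (x, y) \<notin> arcs D) \<and>
     (\<forall>x\<in>verts D - N. \<exists>y\<in>N. (x, y) \<in> arcs D)"

end

theory Submission
  imports Defs
begin

theorem mainTheorem7:
  fixes D :: "'a digraph" and Ds :: "nat \<Rightarrow> 'a digraph" and Ps :: "nat \<Rightarrow> 'a list"
    and k i :: nat and N :: "'a set"
  assumes "digraph D" and "strong D" and "nonseparable D"
    and "ear_decomposition D Ds Ps k"
    and "1 \<le> i" and "i \<le> k"
    and "path_len (Ps (i - 1)) \<ge> 2"
    and "kernel (Ds i) N"
    and "\<not> (\<exists>M. kernel (Ds (i - 1)) M)"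
  shows "(hd (Ps (i - 1)) \<notin> N \<and> last (Ps (i - 1)) \<in> N \<and> odd (path_len (Ps (i - 1))))
       \<or> (hd (Ps (i - 1)) \<notin> N \<and> last (Ps (i - 1)) \<notin> N \<and> even (path_len (Ps (i - 1))))"
proof -
  define H where "H = Ds (i - 1)"
  define xs where "xs = Ps (i - 1)"
  have lt: "i - 1 < k" using assms(5,6) by simp
  have ear: "is_ear H D xs" and Dsi: "Ds i = dunion H (path_digraph xs)"
    using assms(4) lt unfolding ear_decomposition_def H_def xs_def
    by (metis Suc_pred' assms(5) less_le_trans zero_less_one)+
  have subH: "subdigraph H D" using assms(4) lt unfolding ear_decomposition_def H_def by auto
  have arcsH: "arcs H \<subseteq> verts H \<times> verts H" using subH unfolding subdigraph_def by auto
  have len: "length xs \<ge> 3" using assms(7) unfolding xs_def path_len_def by simp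
  have dist: "distinct xs" using ear unfolding is_ear_def is_path_def by auto
  have internal: "\<And>j. 0 < j \<Longrightarrow> Suc j < length xs \<Longrightarrow> xs ! j \<notin> verts H"
    using ear unfolding is_ear_def by auto
  have vDi: "verts (Ds i) = verts H \<union> set xs"
    using Dsi by (simp add: dunion_def verts_def path_digraph_def)
  have aDi: "arcs (Ds i) = arcs H \<union> {(xs ! j, xs ! Suc j) | j. Suc j < length xs}"
    using Dsi by (simp add: dunion_def arcs_def path_digraph_def)
  have Nsub: "N \<subseteq> verts (Ds i)"
   and Nind: "\<And>x y. x \<in> N \<Longrightarrow> y \<in> N \<Longrightarrow> (x, y) \<notin> arcs (Ds i)"
   and Nabs: "\<And>x. x \<in> verts (Ds i) \<Longrightarrow> x \<notin> N \<Longrightarrow> \<exists>y\<in>N. (x, y) \<in> arcs (Ds i)"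
    using assms(8) unfolding kernel_def by blast+
  have start: "xs ! 0 \<notin> N \<and> xs ! 1 \<in> N"
  proof (rule ccontr)
    assume c: "\<not> (xs ! 0 \<notin> N \<and> xs ! 1 \<in> N)"
    have "kernel H (N \<inter> verts H)"
      unfolding kernel_def
    proof (intro conjI ballI)
      show "N \<inter> verts H \<subseteq> verts H" by auto
    next
      fix x y assume "x \<in> N \<inter> verts H" "y \<in> N \<inter> verts H"
      then show "(x, y) \<notin> arcs H" using Nind aDi by auto
    next
      fix x assume x: "x \<in> verts H - N \<inter> verts H"
      then obtain y where y: "y \<in> N" "(x, y) \<in> arcs (Ds i)" using Nabs vDi by auto
      show "\<exists>y\<in>N \<inter> verts H. (x, y) \<in> arcs H"
      proof (cases "(x, y) \<in> arcs H")
        case True then show ?thesis using y arcsH by auto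
      next
        case False
        then obtain j where j: "x = xs ! j" "y = xs ! Suc j" "Suc j < length xs"
          using y aDi by auto
        have "j = 0" using internal j x by (metis Diff_iff neq0_conv)
        then show ?thesis using j x y c by auto
      qed
    qed
    then show False using assms(9) H_def by auto
  qed
  have alt: "\<And>j. 1 \<le> j \<Longrightarrow> j < length xs \<Longrightarrow> (xs ! j \<in> N \<longleftrightarrow> odd j)"
  proof -
    fix j :: nat
    assume "1 \<le> j" "j < length xs"
    then show "xs ! j \<in> N \<longleftrightarrow> odd j"
    proof (induction j rule: dec_induct)
      case base then show ?case using start by simp
    next
      case (step j)
      have jl: "Suc j < length xs" using step by simp
      have arc: "(xs ! j, xs ! Suc j) \<in> arcs (Ds i)" using aDi jl by auto
      have nH: "xs ! j \<notin> verts H" using internal step jl by simp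
      show ?case
      proof (cases "xs ! j \<in> N")
        case True
        then have "xs ! Suc j \<notin> N" using Nind arc by blast
        then show ?thesis using True step jl by simp
      next
        case False
        have "xs ! j \<in> verts (Ds i)" using vDi jl by simp
        then obtain y where y: "y \<in> N" "(xs ! j, y) \<in> arcs (Ds i)" using Nabs False by blast
        have "(xs ! j, y) \<notin> arcs H" using nH arcsH by auto
        then obtain m where m: "xs ! j = xs ! m" "y = xs ! Suc m" "Suc m < length xs"
          using y aDi by auto
        have "m = j" using m dist jl nth_eq_iff_index_eq by (metis Suc_lessD)
        then have "xs ! Suc j \<in> N" using m y by simp
        then show ?thesis using False step jl by simp
      qed
    qed
  qed
  have hd: "hd xs = xs ! 0" using len by (metis hd_conv_nth list.size(3) not_numeral_le_zero)
  have lst: "last xs = xs ! (length xs - 1)" using len by (metis last_conv_nth list.size(3) not_numeral_le_zero)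
  have "last xs \<in> N \<longleftrightarrow> odd (length xs - 1)" using alt[of "length xs - 1"] len lst by simp
  then show ?thesis using start hd unfolding xs_def[symmetric] path_len_def by auto
qed

end
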